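(* Let $\mathcal{H}$ be a quasitriangular Hopf algebra with universal R-matrix $\mathcal{R}$, let $\mathcal{L}$ be a quasi-commutative left $\mathcal{H}$-module algebra ($(\mathcal{R}_2\triangleright\ell_2)(\mathcal{R}_1\triangleright\ell_1)=\ell_1\ell_2$ for all $\ell_1,\ell_2\in\mathcal{L}$), and suppose $\mathcal{R}\in\mathcal{H}\otimes\mathcal{K}$ for a Hopf subalgebra $\mathcal{K}\subset\mathcal{H}$. Then $\mathcal{L}$ is a $\mathcal{K}$-base algebra with respect to the restricted $\mathcal{K}$-action and the $\mathcal{K}$-coaction $\delta(\ell):=\mathcal{R}_2\otimes\mathcal{R}_1\triangleright\ell$.
   Context: $\mathcal{H}$ is a Hopf algebra over a commutative ring $k$ (over a field of characteristic zero), Sweedler notation $\Delta(x)=x^{(1)}\otimes x^{(2)}$; the universal R-matrix $\mathcal{R}=\mathcal{R}_1\otimes\mathcal{R}_2$ (summation implicit) satisfies $\mathcal{R}\Delta(h)=\Delta^{op}(h)\mathcal{R}$, $(\Delta\otimes\mathrm{id})(\mathcal{R})=\mathcal{R}_{13}\mathcal{R}_{23}$, $(\mathrm{id}\otimes\Delta)(\mathcal{R})=\mathcal{R}_{13}\mathcal{R}_{12}$. A $\mathcal{K}$-base algebra is a left $\mathcal{K}$-module algebra and left $\mathcal{K}$-comodule algebra $\mathcal{L}$ (action $\triangleright$, coaction $\delta(\ell)=\ell^{(1)}\otimes\ell^{[2]}$) satisfying $\{x^{(1)}\triangleright\ell\}^{(1)}x^{(2)}\otimes\{x^{(1)}\triangleright\ell\}^{[2]}=x^{(1)}\ell^{(1)}\otimes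 x^{(2)}\triangleright\ell^{[2]}$ for $x\in\mathcal{K}$, $\ell\in\mathcal{L}$, and $\ell_1\ell_2=(\ell_1^{(1)}\triangleright\ell_2)\ell_1^{[2]}$ for $\ell_1,\ell_2\in\mathcal{L}$. *)

theory Defs
  imports Complex_Main
begin

text \<open>
Elements of a tensor product V \<otimes> W (resp. U \<otimes> V \<otimes> W) are
represented by finite lists of elementary tensors (Sweedler sums).
Two such lists denote the same tensor iff they agree under all products
of linear functionals (this is tensor equality, since over a field
V \<otimes> W embeds into the dual of V* \<otimes> W*).
\<close>

definition kalgebra :: "('k::field \<Rightarrow> 'a::ring_1 \<Rightarrow> 'a) \<Rightarrow> bool" where
  "kalgebra s \<longleftrightarrow> vector_space s \<and>
     (\<forall>c x y. s c (x * y) = s c x * y \<and> s c (x * y) = x * s c y)"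

definition lin_fun :: "('k::field \<Rightarrow> 'a::ab_group_add \<Rightarrow> 'a) \<Rightarrow> ('a \<Rightarrow> 'k) \<Rightarrow> bool" where
  "lin_fun s f \<longleftrightarrow> Vector_Spaces.linear s (*) f"

definition teq2 :: "('k::field \<Rightarrow> 'a::ab_group_add \<Rightarrow> 'a) \<Rightarrow> ('k \<Rightarrow> 'b::ab_group_add \<Rightarrow> 'b)
     \<Rightarrow> ('a \<times> 'b) list \<Rightarrow> ('a \<times> 'b) list \<Rightarrow> bool" where
  "teq2 sA sB xs ys \<longleftrightarrow> (\<forall>\<phi> \<psi>. lin_fun sA \<phi> \<longrightarrow> lin_fun sB \<psi> \<longrightarrow>
      (\<Sum>(a,b)\<leftarrow>xs. \<phi> a * \<psi> b) = (\<Sum>(a,b)\<leftarrow>ys. \<phi> a * \<psi> b))"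

definition teq3 :: "('k::field \<Rightarrow> 'a::ab_group_add \<Rightarrow> 'a) \<Rightarrow> ('k \<Rightarrow> 'b::ab_group_add \<Rightarrow> 'b)
     \<Rightarrow> ('k \<Rightarrow> 'c::ab_group_add \<Rightarrow> 'c)
     \<Rightarrow> ('a \<times> 'b \<times> 'c) list \<Rightarrow> ('a \<times> 'b \<times> 'c) list \<Rightarrow> bool" where
  "teq3 sA sB sC xs ys \<longleftrightarrow> (\<forall>\<phi> \<psi> \<chi>. lin_fun sA \<phi> \<longrightarrow> lin_fun sB \<psi> \<longrightarrow> lin_fun sC \<chi> \<longrightarrow>
      (\<Sum>(a,b,c)\<leftarrow>xs. \<phi> a * \<psi> b * \<chi> c) = (\<Sum>(a,b,c)\<leftarrow>ys. \<phi> a * \<psi> b * \<chi> c))"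

definition hopf_algebra :: "('k::field \<Rightarrow> 'h::ring_1 \<Rightarrow> 'h) \<Rightarrow> ('h \<Rightarrow> ('h \<times> 'h) list)
     \<Rightarrow> ('h \<Rightarrow> 'k) \<Rightarrow> ('h \<Rightarrow> 'h) \<Rightarrow> bool" where
  "hopf_algebra sH \<Delta> \<epsilon> S \<longleftrightarrow> kalgebra sH \<and>
     \<comment> \<open>\<Delta> linear\<close>
     (\<forall>x y. teq2 sH sH (\<Delta> (x + y)) (\<Delta> x @ \<Delta> y)) \<and>
     (\<forall>c x. teq2 sH sH (\<Delta> (sH c x)) (map (\<lambda>(a,b). (sH c a, b)) (\<Delta> x))) \<and>
     \<comment> \<open>coassociativity\<close>
     (\<forall>x. teq3 sH sH sH [(a1, a2, b). (a,b) \<leftarrow> \<Delta> x, (a1,a2) \<leftarrow> \<Delta> a]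
                         [(a, b1, b2). (a,b) \<leftarrow> \<Delta> x, (b1,b2) \<leftarrow> \<Delta> b]) \<and>
     \<comment> \<open>counit\<close>
     lin_fun sH \<epsilon> \<and>
     (\<forall>x. (\<Sum>(a,b)\<leftarrow>\<Delta> x. sH (\<epsilon> a) b) = x) \<and>
     (\<forall>x. (\<Sum>(a,b)\<leftarrow>\<Delta> x. sH (\<epsilon> b) a) = x) \<and>
     \<comment> \<open>\<Delta> and \<epsilon> are algebra maps\<close>
     (\<forall>x y. teq2 sH sH (\<Delta> (x * y)) [(a * c, b * d). (a,b) \<leftarrow> \<Delta> x, (c,d) \<leftarrow> \<Delta> y]) \<and>
     teq2 sH sH (\<Delta> 1) [(1, 1)] \<and>
     (\<forall>x y. \<epsilon> (x * y) = \<epsilon> x * \<epsilon> y) \<and> \<epsilon> 1 = 1 \<and>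
     \<comment> \<open>antipode\<close>
     Vector_Spaces.linear sH sH S \<and>
     (\<forall>x. (\<Sum>(a,b)\<leftarrow>\<Delta> x. S a * b) = sH (\<epsilon> x) 1) \<and>
     (\<forall>x. (\<Sum>(a,b)\<leftarrow>\<Delta> x. a * S b) = sH (\<epsilon> x) 1)"

definition tmul2 :: "('h::times \<times> 'h) list \<Rightarrow> ('h \<times> 'h) list \<Rightarrow> ('h \<times> 'h) list" where
  "tmul2 xs ys = [(a * c, b * d). (a,b) \<leftarrow> xs, (c,d) \<leftarrow> ys]"

definition quasitriangular :: "('k::field \<Rightarrow> 'h::ring_1 \<Rightarrow> 'h) \<Rightarrow> ('h \<Rightarrow> ('h \<times> 'h) list)
     \<Rightarrow> ('h \<Rightarrow> 'k) \<Rightarrow> ('h \<Rightarrow> 'h) \<Rightarrow> ('h \<times> 'h) list \<Rightarrow> bool" where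
  "quasitriangular sH \<Delta> \<epsilon> S R \<longleftrightarrow> hopf_algebra sH \<Delta> \<epsilon> S \<and>
     (\<exists>Ri. teq2 sH sH (tmul2 R Ri) [(1,1)] \<and> teq2 sH sH (tmul2 Ri R) [(1,1)]) \<and>
     (\<forall>x. teq2 sH sH (tmul2 R (\<Delta> x)) (tmul2 (map (\<lambda>(a,b). (b,a)) (\<Delta> x)) R)) \<and>
     teq3 sH sH sH [(a1, a2, r2). (r1,r2) \<leftarrow> R, (a1,a2) \<leftarrow> \<Delta> r1]
                   [(r1, s1, r2 * s2). (r1,r2) \<leftarrow> R, (s1,s2) \<leftarrow> R] \<and>
     teq3 sH sH sH [(r1, a1, a2). (r1,r2) \<leftarrow> R, (a1,a2) \<leftarrow> \<Delta> r2]
                   [(r1 * s1, s2, r2). (r1,r2) \<leftarrow> R, (s1,s2) \<leftarrow> R]"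

definition hopf_subalgebra :: "('k::field \<Rightarrow> 'h::ring_1 \<Rightarrow> 'h) \<Rightarrow> ('h \<Rightarrow> ('h \<times> 'h) list)
     \<Rightarrow> ('h \<Rightarrow> 'h) \<Rightarrow> 'h set \<Rightarrow> bool" where
  "hopf_subalgebra sH \<Delta> S K \<longleftrightarrow>
     0 \<in> K \<and> 1 \<in> K \<and> (\<forall>x\<in>K. \<forall>y\<in>K. x + y \<in> K \<and> x * y \<in> K) \<and>
     (\<forall>c. \<forall>x\<in>K. sH c x \<in> K) \<and>
     (\<forall>x\<in>K. \<exists>ys. teq2 sH sH (\<Delta> x) ys \<and> set ys \<subseteq> K \<times> K) \<and>
     (\<forall>x\<in>K. S x \<in> K)"

definition module_algebra :: "('k::field \<Rightarrow> 'h::ring_1 \<Rightarrow> 'h) \<Rightarrow> ('k \<Rightarrow> 'l::ring_1 \<Rightarrow> 'l)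
     \<Rightarrow> ('h \<Rightarrow> ('h \<times> 'h) list) \<Rightarrow> ('h \<Rightarrow> 'k) \<Rightarrow> 'h set \<Rightarrow> ('h \<Rightarrow> 'l \<Rightarrow> 'l) \<Rightarrow> bool" where
  "module_algebra sH sL \<Delta> \<epsilon> K act \<longleftrightarrow> kalgebra sL \<and>
     (\<forall>x\<in>K. \<forall>y\<in>K. \<forall>l. act (x + y) l = act x l + act y l) \<and>
     (\<forall>c. \<forall>x\<in>K. \<forall>l. act (sH c x) l = sL c (act x l)) \<and>
     (\<forall>x\<in>K. \<forall>l m. act x (l + m) = act x l + act x m) \<and>
     (\<forall>x\<in>K. \<forall>c l. act x (sL c l) = sL c (act x l)) \<and>
     (\<forall>x\<in>K. \<forall>y\<in>K. \<forall>l. act (x * y) l = act x (act y l)) \<and>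
     (\<forall>l. act 1 l = l) \<and>
     (\<forall>x\<in>K. \<forall>l m. act x (l * m) = (\<Sum>(a,b)\<leftarrow>\<Delta> x. act a l * act b m)) \<and>
     (\<forall>x\<in>K. act x 1 = sL (\<epsilon> x) 1)"

definition comodule_algebra :: "('k::field \<Rightarrow> 'h::ring_1 \<Rightarrow> 'h) \<Rightarrow> ('k \<Rightarrow> 'l::ring_1 \<Rightarrow> 'l)
     \<Rightarrow> ('h \<Rightarrow> ('h \<times> 'h) list) \<Rightarrow> ('h \<Rightarrow> 'k) \<Rightarrow> 'h set \<Rightarrow> ('l \<Rightarrow> ('h \<times> 'l) list) \<Rightarrow> bool" where
  "comodule_algebra sH sL \<Delta> \<epsilon> K \<delta> \<longleftrightarrow> kalgebra sL \<and>
     (\<forall>l. set (map fst (\<delta> l)) \<subseteq> K) \<and>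
     (\<forall>l m. teq2 sH sL (\<delta> (l + m)) (\<delta> l @ \<delta> m)) \<and>
     (\<forall>c l. teq2 sH sL (\<delta> (sL c l)) (map (\<lambda>(a,n). (a, sL c n)) (\<delta> l))) \<and>
     (\<forall>l. teq3 sH sH sL [(a1, a2, n). (a,n) \<leftarrow> \<delta> l, (a1,a2) \<leftarrow> \<Delta> a]
                         [(a, b, p). (a,n) \<leftarrow> \<delta> l, (b,p) \<leftarrow> \<delta> n]) \<and>
     (\<forall>l. (\<Sum>(a,n)\<leftarrow>\<delta> l. sL (\<epsilon> a) n) = l) \<and>
     (\<forall>l m. teq2 sH sL (\<delta> (l * m)) [(a * b, n * p). (a,n) \<leftarrow> \<delta> l, (b,p) \<leftarrow> \<delta> m]) \<and>
     teq2 sH sL (\<delta> 1) [(1, 1)]"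

definition base_algebra :: "('k::field \<Rightarrow> 'h::ring_1 \<Rightarrow> 'h) \<Rightarrow> ('k \<Rightarrow> 'l::ring_1 \<Rightarrow> 'l)
     \<Rightarrow> ('h \<Rightarrow> ('h \<times> 'h) list) \<Rightarrow> ('h \<Rightarrow> 'k) \<Rightarrow> 'h set
     \<Rightarrow> ('h \<Rightarrow> 'l \<Rightarrow> 'l) \<Rightarrow> ('l \<Rightarrow> ('h \<times> 'l) list) \<Rightarrow> bool" where
  "base_algebra sH sL \<Delta> \<epsilon> K act \<delta> \<longleftrightarrow>
     module_algebra sH sL \<Delta> \<epsilon> K act \<and> comodule_algebra sH sL \<Delta> \<epsilon> K \<delta> \<and>
     (\<forall>x\<in>K. \<forall>l. teq2 sH sL [(c * b, n). (a,b) \<leftarrow> \<Delta> x, (c,n) \<leftarrow> \<delta> (act a l)]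
                            [(a * c, act b n). (a,b) \<leftarrow> \<Delta> x, (c,n) \<leftarrow> \<delta> l]) \<and>
     (\<forall>l1 l2. l1 * l2 = (\<Sum>(a,n)\<leftarrow>\<delta> l1. act a l2 * n))"

definition quasi_commutative :: "('h \<times> 'h) list \<Rightarrow> ('h \<Rightarrow> 'l::ring_1 \<Rightarrow> 'l) \<Rightarrow> bool" where
  "quasi_commutative R act \<longleftrightarrow>
     (\<forall>l1 l2. (\<Sum>(r1,r2)\<leftarrow>R. act r2 l2 * act r1 l1) = l1 * l2)"

end

theory Submission imports Defs begin

lemma vs_k: "vector_space ((*) :: 'k::field \<Rightarrow> 'k \<Rightarrow> 'k)"
  by unfold_locales (auto simp: algebra_simps)

lemma lin_fun_iff: "vector_space s \<Longrightarrow> lin_fun s f \<longleftrightarrow> (\<forall>x y. f (x + y) = f x + f y) \<and> (\<forall>c x. f (s c x) = c * f x)"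
  unfolding lin_fun_def Vector_Spaces.linear_iff using vs_k by blast

lemma lin_fun_add: "lin_fun s f \<Longrightarrow> f (x + y) = f x + f y"
  unfolding lin_fun_def Vector_Spaces.linear_iff by blast
lemma lin_fun_scale: "lin_fun s f \<Longrightarrow> f (s c x) = c * f x"
  unfolding lin_fun_def Vector_Spaces.linear_iff by blast
lemma lin_fun_vs: "lin_fun s f \<Longrightarrow> vector_space s"
  unfolding lin_fun_def Vector_Spaces.linear_iff by blast
lemma lin_fun_zero: "lin_fun s f \<Longrightarrow> f 0 = 0"
proof -
  assume a: "lin_fun s f"
  have "f (0 + 0) = f 0 + f 0" by (rule lin_fun_add[OF a])
  then have "f 0 = f 0 + f 0" by (simp only: add_0)
  then show ?thesis using add_cancel_right_right by metis
qed
lemma lin_fun_neg: "lin_fun s f \<Longrightarrow> f (- x) = - f x"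
  using lin_fun_add[of s f x "-x"] lin_fun_zero[of s f] by (simp add: eq_neg_iff_add_eq_0 add.commute)
lemma lin_fun_sum_list: "lin_fun s f \<Longrightarrow> f (sum_list (map g xs)) = (\<Sum>x\<leftarrow>xs. f (g x))"
  by (induction xs) (auto simp: lin_fun_zero lin_fun_add)

lemma exists_sep_fun:
  assumes vs: "vector_space s" and a: "a \<notin> module.span s S"
  shows "\<exists>\<phi>. lin_fun s \<phi> \<and> \<phi> a = 1 \<and> (\<forall>x\<in>S. \<phi> x = 0)"
proof -
  interpret vector_space s by fact
  interpret vp: vector_space_pair s "(*)" using vs vs_k by (simp add: vector_space_pair_def)
  obtain B where B: "B \<subseteq> span S" "independent B" "span S \<subseteq> span B" "card B = dim (span S)"
    by (rule basis_exists)
  have aB: "a \<notin> span B"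
    using B a span_mono[OF B(1)] span_span by blast
  have ind: "independent (insert a B)" using independent_insertI[OF aB B(2)] .
  define \<phi> where "\<phi> = vp.construct (insert a B) (\<lambda>v. if v = a then 1 else 0)"
  have lin: "Vector_Spaces.linear s (*) \<phi>" unfolding \<phi>_def by (rule vp.linear_construct[OF ind])
  have pa: "\<phi> a = 1" unfolding \<phi>_def by (subst vp.construct_basis[OF ind]) auto
  have pb: "\<phi> b = 0" if "b \<in> B" for b
    using that aB span_base[of b B] unfolding \<phi>_def by (subst vp.construct_basis[OF ind]) auto
  have "\<phi> x = 0" if "x \<in> S" for x
  proof -
    interpret l: Vector_Spaces.linear s "(*)" \<phi> by (fact lin)
    have "x \<in> span B" using that B(3) span_base[of x S] by blast
    then show ?thesis using l.eq_0_on_span[of B x] pb by blast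
  qed
  then show ?thesis using lin pa unfolding lin_fun_def by blast
qed

lemma span_list_repr:
  assumes vs: "vector_space s" and "a \<in> module.span s (set xs)"
  shows "\<exists>ds. length ds = length xs \<and> a = (\<Sum>(d,x)\<leftarrow>zip ds xs. s d x)"
  using assms(2)
proof (induction xs arbitrary: a)
  case Nil
  then show ?case using module.span_empty[OF vs[folded module_iff_vector_space]] by simp
next
  case (Cons x xs)
  interpret vector_space s by fact
  from Cons.prems obtain k where "a - s k x \<in> span (set xs)"
    using span_insert by auto
  then obtain ds where "length ds = length xs" "a - s k x = (\<Sum>(d,x)\<leftarrow>zip ds xs. s d x)"
    using Cons.IH by blast
  then show ?case by (intro exI[of _ "k # ds"]) (simp add: diff_eq_eq)
qed

lemma lin_fun_mult_const:
  assumes "lin_fun s \<phi>" shows "lin_fun s (\<lambda>x. \<phi> x * c)"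
  using assms lin_fun_vs[OF assms] by (simp add: lin_fun_iff distrib_right)

lemma sum_zip_snd:
  "length ds = length xs \<Longrightarrow> (\<Sum>p\<leftarrow>zip ds xs. f (snd p)) = (\<Sum>x\<leftarrow>xs. f x)"
  by (induction ds xs rule: list_induct2) auto

lemma sep0:
  assumes vA: "vector_space sA" and vB: "vector_space sB"
    and BL1: "\<And>y. lin_fun sA (\<lambda>x. Bf x y)" and BL2: "\<And>x. lin_fun sB (Bf x)"
  shows "(\<forall>\<phi> \<psi>. lin_fun sA \<phi> \<longrightarrow> lin_fun sB \<psi> \<longrightarrow> (\<Sum>(a,b)\<leftarrow>zs. \<phi> a * \<psi> b) = 0)
     \<Longrightarrow> (\<Sum>(a,b)\<leftarrow>zs. Bf a b) = (0::'k::field)"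
proof (induction zs rule: length_induct)
  case (1 zs)
  show ?case
  proof (cases zs)
    case Nil then show ?thesis by simp
  next
    case (Cons p rest)
    obtain a0 b0 where p: "p = (a0,b0)" by (cases p)
    show ?thesis
    proof (cases "a0 \<in> module.span sA (set (map fst rest))")
      case True
      then obtain ds where ds: "length ds = length (map fst rest)"
          "a0 = (\<Sum>(d,x)\<leftarrow>zip ds (map fst rest). sA d x)"
        using span_list_repr[OF vA] by blast
      define rest' where "rest' = map (\<lambda>q. (fst (snd q), snd (snd q) + sB (fst q) b0)) (zip ds rest)"
      have len: "length ds = length rest" using ds(1) by simp
      have key: "(\<Sum>(a,b)\<leftarrow>rest'. F a b) = (\<Sum>(a,b)\<leftarrow>zs. F a b)"
        if F1: "\<And>y. lin_fun sA (\<lambda>x. F x y)" and F2: "\<And>x. lin_fun sB (F x)" for F :: "_ \<Rightarrow> _ \<Rightarrow> 'k"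
      proof -
        have "(\<Sum>(a,b)\<leftarrow>rest'. F a b) = (\<Sum>q\<leftarrow>zip ds rest. F (fst (snd q)) (snd (snd q)) + fst q * F (fst (snd q)) b0)"
          unfolding rest'_def by (simp add: o_def lin_fun_add[OF F2] lin_fun_scale[OF F2])
        also have "\<dots> = (\<Sum>q\<leftarrow>zip ds rest. F (fst (snd q)) (snd (snd q))) + (\<Sum>q\<leftarrow>zip ds rest. fst q * F (fst (snd q)) b0)"
          by (rule sum_list_addf)
        also have "(\<Sum>q\<leftarrow>zip ds rest. F (fst (snd q)) (snd (snd q))) = (\<Sum>(a,b)\<leftarrow>rest. F a b)"
          using sum_zip_snd[OF len, of "\<lambda>x. F (fst x) (snd x)"] by (simp add: split_def)
        also have "(\<Sum>q\<leftarrow>zip ds rest. fst q * F (fst (snd q)) b0) = F a0 b0"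
        proof -
          have "F a0 b0 = (\<Sum>x\<leftarrow>zip ds (map fst rest). F (sA (fst x) (snd x)) b0)"
            unfolding ds(2) using lin_fun_sum_list[OF F1[of b0], of "\<lambda>(d,x). sA d x"]
            by (simp add: case_prod_beta)
          also have "\<dots> = (\<Sum>q\<leftarrow>zip ds rest. fst q * F (fst (snd q)) b0)"
            by (simp add: zip_map2 o_def case_prod_beta lin_fun_scale[OF F1])
          finally show ?thesis by simp
        qed
        finally show ?thesis using Cons p by simp
      qed
      have "(\<Sum>(a,b)\<leftarrow>rest'. Bf a b) = 0"
      proof -
        have "length rest' < length zs" using Cons len by (simp add: rest'_def)
        moreover have "\<forall>\<phi> \<psi>. lin_fun sA \<phi> \<longrightarrow> lin_fun sB \<psi> \<longrightarrow> (\<Sum>(a,b)\<leftarrow>rest'. \<phi> a * \<psi> b) = 0"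
        proof (intro allI impI)
          fix \<phi> \<psi> assume h: "lin_fun sA \<phi>" "lin_fun sB \<psi>"
          have "(\<Sum>(a,b)\<leftarrow>rest'. \<phi> a * \<psi> b) = (\<Sum>(a,b)\<leftarrow>zs. \<phi> a * \<psi> b)"
          proof (rule key)
            show "lin_fun sA (\<lambda>x. \<phi> x * \<psi> y)" for y using lin_fun_mult_const[OF h(1)] .
            show "lin_fun sB (\<lambda>y. \<phi> x * \<psi> y)" for x
              using h(2) lin_fun_vs[OF h(2)] by (simp add: lin_fun_iff distrib_left mult.left_commute)
          qed
          then show "(\<Sum>(a,b)\<leftarrow>rest'. \<phi> a * \<psi> b) = 0" using 1(2) h by simp
        qed
        ultimately show ?thesis using 1(1) by blast
      qed
      then show ?thesis using key[OF BL1 BL2] by simp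
    next
      case False
      obtain \<phi>0 where \<phi>0: "lin_fun sA \<phi>0" "\<phi>0 a0 = 1" "\<forall>x\<in>set (map fst rest). \<phi>0 x = 0"
        using exists_sep_fun[OF vA False] by blast
      have van: "(\<Sum>(a,b)\<leftarrow>rest. \<phi>0 a * f b) = 0" for f :: "_ \<Rightarrow> 'k"
        using \<phi>0(3) by (induction rest) auto
      have b0: "b0 = 0"
      proof (rule ccontr)
        assume "b0 \<noteq> 0"
        then have "b0 \<notin> module.span sB {}"
          using module.span_empty[OF vB[folded module_iff_vector_space]] by simp
        then obtain \<psi> where \<psi>: "lin_fun sB \<psi>" "\<psi> b0 = 1"
          using exists_sep_fun[OF vB] by blast
        have "(\<Sum>(a,b)\<leftarrow>zs. \<phi>0 a * \<psi> b) = 1"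
          using Cons p \<phi>0(2) \<psi>(2) van[of \<psi>] by simp
        then show False using 1(2) \<phi>0(1) \<psi>(1) by simp
      qed
      have "(\<Sum>(a,b)\<leftarrow>rest. Bf a b) = 0"
      proof -
        have "length rest < length zs" using Cons by simp
        moreover have "\<forall>\<phi> \<psi>. lin_fun sA \<phi> \<longrightarrow> lin_fun sB \<psi> \<longrightarrow> (\<Sum>(a,b)\<leftarrow>rest. \<phi> a * \<psi> b) = 0"
        proof (intro allI impI)
          fix \<phi> \<psi> assume h: "lin_fun sA \<phi>" "lin_fun sB \<psi>"
          then have "(\<Sum>(a,b)\<leftarrow>zs. \<phi> a * \<psi> b) = 0" using 1(2) by simp
          then show "(\<Sum>(a,b)\<leftarrow>rest. \<phi> a * \<psi> b) = 0"
            using Cons p b0 lin_fun_zero[OF h(2)] by simp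
        qed
        ultimately show ?thesis using 1(1) by blast
      qed
      then show ?thesis using Cons p b0 lin_fun_zero[OF BL2] by simp
    qed
  qed
qed


lemma sum_list_neg: "(\<Sum>x\<leftarrow>xs. - f x) = - (\<Sum>x\<leftarrow>xs. (f x :: 'a::ab_group_add))"
  by (induction xs) auto

lemma teq2_bilin:
  assumes vA: "vector_space sA" and vB: "vector_space sB"
    and BL1: "\<And>y. lin_fun sA (\<lambda>x. Bf x y)" and BL2: "\<And>x. lin_fun sB (Bf x)"
    and T: "teq2 sA sB xs ys"
  shows "(\<Sum>(a,b)\<leftarrow>xs. Bf a b) = (\<Sum>(a,b)\<leftarrow>ys. (Bf a b :: 'k::field))"
proof -
  define zs where "zs = xs @ map (\<lambda>(a,b). (a, - b)) ys"
  have "(\<Sum>(a,b)\<leftarrow>zs. Bf a b) = 0"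
  proof (rule sep0[OF vA vB BL1 BL2], intro allI impI)
    fix \<phi> \<psi> assume h: "lin_fun sA \<phi>" "lin_fun sB \<psi>"
    have "(\<Sum>(a,b)\<leftarrow>zs. \<phi> a * \<psi> b) = (\<Sum>(a,b)\<leftarrow>xs. \<phi> a * \<psi> b) - (\<Sum>(a,b)\<leftarrow>ys. \<phi> a * \<psi> b)"
      unfolding zs_def by (simp add: o_def split_def lin_fun_neg[OF h(2)] sum_list_neg)
    then show "(\<Sum>(a,b)\<leftarrow>zs. \<phi> a * \<psi> b) = 0" using T h unfolding teq2_def by simp
  qed
  moreover have "(\<Sum>(a,b)\<leftarrow>zs. Bf a b) = (\<Sum>(a,b)\<leftarrow>xs. Bf a b) - (\<Sum>(a,b)\<leftarrow>ys. Bf a b)"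
    unfolding zs_def by (simp add: o_def split_def lin_fun_neg[OF BL2] sum_list_neg)
  ultimately show ?thesis by simp
qed

lemma teq3_bilin:
  assumes vA: "vector_space sA" and vB: "vector_space sB"
    and BL1: "\<And>y. lin_fun sA (\<lambda>x. Bf x y)" and BL2: "\<And>x. lin_fun sB (Bf x)"
    and \<chi>: "lin_fun sC \<chi>"
    and T: "teq3 sA sB sC xs ys"
  shows "(\<Sum>(a,b,c)\<leftarrow>xs. \<chi> c * Bf a b) = (\<Sum>(a,b,c)\<leftarrow>ys. (\<chi> c * Bf a b :: 'k::field))"
proof -
  have T2: "teq2 sA sB (map (\<lambda>(a,b,c). (a, sB (\<chi> c) b)) xs) (map (\<lambda>(a,b,c). (a, sB (\<chi> c) b)) ys)"
    unfolding teq2_def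
  proof (intro allI impI)
    fix \<phi> \<psi> assume h: "lin_fun sA \<phi>" "lin_fun sB \<psi>"
    have "(\<Sum>(a,b,c)\<leftarrow>xs. \<phi> a * \<psi> b * \<chi> c) = (\<Sum>(a,b,c)\<leftarrow>ys. \<phi> a * \<psi> b * \<chi> c)"
      using T h \<chi> unfolding teq3_def by blast
    then show "(\<Sum>(a,b)\<leftarrow>map (\<lambda>(a,b,c). (a, sB (\<chi> c) b)) xs. \<phi> a * \<psi> b) =
               (\<Sum>(a,b)\<leftarrow>map (\<lambda>(a,b,c). (a, sB (\<chi> c) b)) ys. \<phi> a * \<psi> b)"
      by (simp add: o_def split_def lin_fun_scale[OF h(2)] mult_ac)
  qed
  show ?thesis using teq2_bilin[OF vA vB BL1 BL2 T2]
    by (simp add: o_def split_def lin_fun_scale[OF BL2])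
qed


lemma sum_swap: "(\<Sum>x\<leftarrow>xs. \<Sum>y\<leftarrow>ys. f x y) = (\<Sum>y\<leftarrow>ys. \<Sum>x\<leftarrow>xs. (f x y :: 'a::comm_monoid_add))"
  by (induction xs) (auto simp: sum_list_addf)


lemma sum_list_concat: "sum_list (concat xss) = sum_list (map sum_list (xss :: 'a::monoid_add list list))"
  by (induction xss) auto

theorem corollary3p7:
  fixes sH :: "'k::field_char_0 \<Rightarrow> 'h::ring_1 \<Rightarrow> 'h"
    and sL :: "'k \<Rightarrow> 'l::ring_1 \<Rightarrow> 'l"
    and \<Delta> :: "'h \<Rightarrow> ('h \<times> 'h) list" and \<epsilon> :: "'h \<Rightarrow> 'k" and S :: "'h \<Rightarrow> 'h"
    and R :: "('h \<times> 'h) list" and act :: "'h \<Rightarrow> 'l \<Rightarrow> 'l" and K :: "'h set"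
  assumes "quasitriangular sH \<Delta> \<epsilon> S R"
    and "module_algebra sH sL \<Delta> \<epsilon> UNIV act"
    and "quasi_commutative R act"
    and "hopf_subalgebra sH \<Delta> S K"
    and "\<forall>(r1, r2) \<in> set R. r2 \<in> K"
  shows "base_algebra sH sL \<Delta> \<epsilon> K act (\<lambda>l. [(r2, act r1 l). (r1, r2) \<leftarrow> R])"
proof -
  define \<delta> where "\<delta> = (\<lambda>l. [(r2, act r1 l). (r1, r2) \<leftarrow> R])"
  have dl: "\<delta> l = map (\<lambda>(r1,r2). (r2, act r1 l)) R" for l
    unfolding \<delta>_def by (induction R) auto
  from assms(1) have hopf: "hopf_algebra sH \<Delta> \<epsilon> S"
    and Ri: "\<exists>Ri. teq2 sH sH (tmul2 R Ri) [(1,1)] \<and> teq2 sH sH (tmul2 Ri R) [(1,1)]"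
    and QTd: "\<And>x. teq2 sH sH (tmul2 R (\<Delta> x)) (tmul2 (map (\<lambda>(a,b). (b,a)) (\<Delta> x)) R)"
    and QT4: "teq3 sH sH sH [(a1, a2, r2). (r1,r2) \<leftarrow> R, (a1,a2) \<leftarrow> \<Delta> r1]
                   [(r1, s1, r2 * s2). (r1,r2) \<leftarrow> R, (s1,s2) \<leftarrow> R]"
    and QT5: "teq3 sH sH sH [(r1, a1, a2). (r1,r2) \<leftarrow> R, (a1,a2) \<leftarrow> \<Delta> r2]
                   [(r1 * s1, s2, r2). (r1,r2) \<leftarrow> R, (s1,s2) \<leftarrow> R]"
    unfolding quasitriangular_def by auto
  from hopf have kH: "kalgebra sH" and eps: "lin_fun sH \<epsilon>"
    and counitL: "\<And>x. (\<Sum>(a,b)\<leftarrow>\<Delta> x. sH (\<epsilon> a) b) = x"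
    and eps1: "\<epsilon> 1 = 1"
    unfolding hopf_algebra_def by auto
  from kH have vH: "vector_space sH" and sHm1: "\<And>c x y. sH c (x * y) = sH c x * y"
    and sHm2: "\<And>c x y. sH c (x * y) = x * sH c y"
    unfolding kalgebra_def by blast+
  note MA = assms(2)[unfolded module_algebra_def]
  from MA have kL: "kalgebra sL"
    and act_addh: "\<And>x y l. act (x + y) l = act x l + act y l"
    and act_sh: "\<And>c x l. act (sH c x) l = sL c (act x l)"
    and act_addl: "\<And>x l m. act x (l + m) = act x l + act x m"
    and act_sl: "\<And>x c l. act x (sL c l) = sL c (act x l)"
    and act_mult: "\<And>x y l. act (x * y) l = act x (act y l)"
    and act_1: "\<And>l. act 1 l = l"
    and act_prod: "\<And>x l m. act x (l * m) = (\<Sum>(a,b)\<leftarrow>\<Delta> x. act a l * act b m)"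
    and act_unit: "\<And>x. act x 1 = sL (\<epsilon> x) 1"
    by auto
  from kL have vL: "vector_space sL" and sLm1: "\<And>c x y. sL c (x * y) = sL c x * y"
    and sLm2: "\<And>c x y. sL c (x * y) = x * sL c y"
    unfolding kalgebra_def by blast+
  have lin_act: "lin_fun sH (\<lambda>h. \<psi> (act h l))" if "lin_fun sL \<psi>" for \<psi> l
    using that vH by (simp add: lin_fun_iff act_addh act_sh lin_fun_add lin_fun_scale)
  have lin_rm: "lin_fun sH (\<lambda>h. \<phi> (h * c))" if "lin_fun sH \<phi>" for \<phi> c
    using that vH by (simp add: lin_fun_iff distrib_right sHm1[symmetric] lin_fun_add lin_fun_scale)
  have lin_lm: "lin_fun sH (\<lambda>h. \<phi> (c * h))" if "lin_fun sH \<phi>" for \<phi> c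
    using that vH by (simp add: lin_fun_iff distrib_left sHm2[symmetric] lin_fun_add lin_fun_scale)
  have QC: "\<And>l1 l2. (\<Sum>(r1,r2)\<leftarrow>R. act r2 l2 * act r1 l1) = l1 * l2"
    using assms(3) unfolding quasi_commutative_def by blast

  have G1: "module_algebra sH sL \<Delta> \<epsilon> K act"
    using MA unfolding module_algebra_def by blast
  have G4: "\<forall>l1 l2. l1 * l2 = (\<Sum>(a,n)\<leftarrow>\<delta> l1. act a l2 * n)"
    using QC by (simp add: dl o_def case_prod_beta split_def)
  have C2: "\<forall>l. set (map fst (\<delta> l)) \<subseteq> K"
    using assms(5) by (auto simp: dl)
  have C3: "\<forall>l m. teq2 sH sL (\<delta> (l + m)) (\<delta> l @ \<delta> m)"
    unfolding teq2_def
    by (auto simp: dl o_def split_def act_addl lin_fun_add distrib_left sum_list_addf)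
  have C4: "\<forall>c l. teq2 sH sL (\<delta> (sL c l)) (map (\<lambda>(a,n). (a, sL c n)) (\<delta> l))"
    unfolding teq2_def by (auto simp: dl o_def split_def act_sl)
  have C6: "\<forall>l. (\<Sum>(a,n)\<leftarrow>\<delta> l. sL (\<epsilon> a) n) = l"
  proof
    fix l
    have "l = (\<Sum>(r1,r2)\<leftarrow>R. act r2 1 * act r1 l)" using QC[of 1 l] by simp
    then show "(\<Sum>(a,n)\<leftarrow>\<delta> l. sL (\<epsilon> a) n) = l"
      by (simp add: dl o_def split_def act_unit sLm1[symmetric])
  qed
  have QT5s: "\<And>\<phi> \<psi> \<chi>. lin_fun sH \<phi> \<Longrightarrow> lin_fun sH \<psi> \<Longrightarrow> lin_fun sH \<chi> \<Longrightarrow>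
     (\<Sum>x\<leftarrow>R. \<Sum>xa\<leftarrow>\<Delta> (snd x). \<phi> (fst x) * \<psi> (fst xa) * \<chi> (snd xa)) =
     (\<Sum>x\<leftarrow>R. \<Sum>xa\<leftarrow>R. \<phi> (fst x * fst xa) * \<psi> (snd xa) * \<chi> (snd x))"
    using QT5 unfolding teq3_def by (simp add: o_def split_def sum_list_concat map_concat)
  have QT4s: "\<And>\<phi> \<psi> \<chi>. lin_fun sH \<phi> \<Longrightarrow> lin_fun sH \<psi> \<Longrightarrow> lin_fun sH \<chi> \<Longrightarrow>
     (\<Sum>x\<leftarrow>R. \<Sum>xa\<leftarrow>\<Delta> (fst x). \<phi> (fst xa) * \<psi> (snd xa) * \<chi> (snd x)) =
     (\<Sum>x\<leftarrow>R. \<Sum>xa\<leftarrow>R. \<phi> (fst x) * \<psi> (fst xa) * \<chi> (snd x * snd xa))"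
    using QT4 unfolding teq3_def by (simp add: o_def split_def sum_list_concat map_concat)
  have QTds: "\<And>\<phi> \<psi> x. lin_fun sH \<phi> \<Longrightarrow> lin_fun sH \<psi> \<Longrightarrow>
     (\<Sum>r\<leftarrow>R. \<Sum>y\<leftarrow>\<Delta> x. \<phi> (fst r * fst y) * \<psi> (snd r * snd y)) =
     (\<Sum>y\<leftarrow>\<Delta> x. \<Sum>r\<leftarrow>R. \<phi> (snd y * fst r) * \<psi> (fst y * snd r))"
    using QTd unfolding teq2_def tmul2_def by (simp add: o_def split_def sum_list_concat map_concat)
  have C5: "\<forall>l. teq3 sH sH sL [(a1, a2, n). (a,n) \<leftarrow> \<delta> l, (a1,a2) \<leftarrow> \<Delta> a]
                         [(a, b, p). (a,n) \<leftarrow> \<delta> l, (b,p) \<leftarrow> \<delta> n]"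
  proof (intro allI, unfold teq3_def, intro allI impI)
    fix l \<phi> \<psi> \<chi> assume h: "lin_fun sH \<phi>" "lin_fun sH \<psi>" "lin_fun sL \<chi>"
    have q: "(\<Sum>x\<leftarrow>R. \<Sum>xa\<leftarrow>\<Delta> (snd x). \<chi> (act (fst x) l) * \<phi> (fst xa) * \<psi> (snd xa)) =
      (\<Sum>x\<leftarrow>R. \<Sum>xa\<leftarrow>R. \<chi> (act (fst x * fst xa) l) * \<phi> (snd xa) * \<psi> (snd x))"
      by (rule QT5s[OF lin_act[OF h(3), of l] h(1) h(2)])
    show "(\<Sum>(a,b,c)\<leftarrow>[(a1, a2, n). (a,n) \<leftarrow> \<delta> l, (a1,a2) \<leftarrow> \<Delta> a]. \<phi> a * \<psi> b * \<chi> c) =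
          (\<Sum>(a,b,c)\<leftarrow>[(a, b, p). (a,n) \<leftarrow> \<delta> l, (b,p) \<leftarrow> \<delta> n]. \<phi> a * \<psi> b * \<chi> c)"
    proof -
      have sw: "(\<Sum>x\<leftarrow>R. \<Sum>xa\<leftarrow>R. \<phi> (snd x) * \<psi> (snd xa) * \<chi> (act (fst xa) (act (fst x) l)))
         = (\<Sum>x\<leftarrow>R. \<Sum>xa\<leftarrow>R. \<chi> (act (fst x * fst xa) l) * \<phi> (snd xa) * \<psi> (snd x))"
        by (subst sum_swap) (simp add: act_mult mult_ac)
      show ?thesis
        apply (simp add: dl o_def split_def sum_list_concat map_concat)
        using q sw by (simp add: mult_ac)
    qed
  qed
  have C7: "\<forall>l m. teq2 sH sL (\<delta> (l * m)) [(a * b, n * p). (a,n) \<leftarrow> \<delta> l, (b,p) \<leftarrow> \<delta> m]"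
  proof (intro allI, unfold teq2_def, intro allI impI)
    fix l m \<phi> \<psi> assume h: "lin_fun sH \<phi>" "lin_fun sL \<psi>"
    define Bf where "Bf = (\<lambda>x y. \<psi> (act x l * act y m))"
    have BL1: "lin_fun sH (\<lambda>x. Bf x y)" for y
      using h(2) vH by (simp add: Bf_def lin_fun_iff act_addh act_sh distrib_right sLm1[symmetric] lin_fun_add lin_fun_scale)
    have BL2: "lin_fun sH (Bf x)" for x
      using h(2) vH by (simp add: Bf_def lin_fun_iff act_addh act_sh distrib_left sLm2[symmetric] lin_fun_add lin_fun_scale)
    have e: "(\<Sum>x\<leftarrow>R. \<Sum>xa\<leftarrow>\<Delta> (fst x). \<phi> (snd x) * Bf (fst xa) (snd xa)) =
             (\<Sum>x\<leftarrow>R. \<Sum>xa\<leftarrow>R. \<phi> (snd x * snd xa) * Bf (fst x) (fst xa))"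
      using teq3_bilin[OF vH vH BL1 BL2 h(1) QT4]
      by (simp add: o_def split_def sum_list_concat map_concat)
    have a: "\<psi> (act r (l * m)) = (\<Sum>xa\<leftarrow>\<Delta> r. Bf (fst xa) (snd xa))" for r
      by (simp add: Bf_def act_prod lin_fun_sum_list[OF h(2)] split_def)
    show "(\<Sum>(a,b)\<leftarrow>\<delta> (l * m). \<phi> a * \<psi> b) =
          (\<Sum>(a,b)\<leftarrow>[(a * b, n * p). (a,n) \<leftarrow> \<delta> l, (b,p) \<leftarrow> \<delta> m]. \<phi> a * \<psi> b)"
      apply (simp add: dl o_def split_def sum_list_concat map_concat a sum_list_const_mult[symmetric])
      using e by (simp add: Bf_def)
  qed
  obtain Ri where Ri1: "teq2 sH sH (tmul2 R Ri) [(1,1)]" using Ri by blast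
  have Ri1s: "\<And>\<phi> \<psi>. lin_fun sH \<phi> \<Longrightarrow> lin_fun sH \<psi> \<Longrightarrow>
      (\<Sum>x\<leftarrow>R. \<Sum>y\<leftarrow>Ri. \<phi> (fst x * fst y) * \<psi> (snd x * snd y)) = \<phi> 1 * \<psi> 1"
    using Ri1 unfolding teq2_def tmul2_def by (simp add: o_def split_def sum_list_concat map_concat)
  define u where "u = (\<Sum>r\<leftarrow>R. sH (\<epsilon> (fst r)) (snd r))"
  have phiu: "\<phi> u = (\<Sum>r\<leftarrow>R. \<epsilon> (fst r) * \<phi> (snd r))" if "lin_fun sH \<phi>" for \<phi>
    unfolding u_def by (simp add: lin_fun_sum_list[OF that] lin_fun_scale[OF that])
  have step1: "(\<Sum>r\<leftarrow>R. \<phi> (fst r) * \<psi> (snd r)) = (\<Sum>r\<leftarrow>R. \<phi> (fst r) * \<psi> (u * snd r))"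
    if h1: "lin_fun sH \<phi>" and h2: "lin_fun sH \<psi>" for \<phi> \<psi>
  proof -
    have cu: "(\<Sum>xa\<leftarrow>\<Delta> y. \<epsilon> (fst xa) * \<phi> (snd xa)) = \<phi> y" for y
      using arg_cong[OF counitL[of y], of \<phi>]
      by (simp add: lin_fun_sum_list[OF h1] lin_fun_scale[OF h1] split_def)
    have us: "\<psi> (u * s) = (\<Sum>x\<leftarrow>R. \<epsilon> (fst x) * \<psi> (snd x * s))" for s
      unfolding u_def
      by (simp add: sum_list_mult_const[symmetric] sHm1[symmetric] lin_fun_sum_list[OF h2] lin_fun_scale[OF h2])
    have e: "(\<Sum>x\<leftarrow>R. \<Sum>xa\<leftarrow>\<Delta> (fst x). \<epsilon> (fst xa) * \<phi> (snd xa) * \<psi> (snd x)) =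
      (\<Sum>x\<leftarrow>R. \<Sum>xa\<leftarrow>R. \<epsilon> (fst x) * \<phi> (fst xa) * \<psi> (snd x * snd xa))"
      by (rule QT4s[OF eps h1 h2])
    have l: "(\<Sum>x\<leftarrow>R. \<Sum>xa\<leftarrow>\<Delta> (fst x). \<epsilon> (fst xa) * \<phi> (snd xa) * \<psi> (snd x))
       = (\<Sum>r\<leftarrow>R. \<phi> (fst r) * \<psi> (snd r))"
      by (simp add: sum_list_mult_const cu)
    have r: "(\<Sum>x\<leftarrow>R. \<Sum>xa\<leftarrow>R. \<epsilon> (fst x) * \<phi> (fst xa) * \<psi> (snd x * snd xa))
       = (\<Sum>r\<leftarrow>R. \<phi> (fst r) * \<psi> (u * snd r))"
      by (subst sum_swap) (simp add: us sum_list_const_mult[symmetric] mult_ac)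
    show ?thesis using e l r by simp
  qed
  have U: "(\<Sum>r\<leftarrow>R. \<epsilon> (fst r) * \<phi> (snd r)) = \<phi> 1" if h: "lin_fun sH \<phi>" for \<phi>
  proof -
    have T1: "(\<Sum>x\<leftarrow>R. \<Sum>y\<leftarrow>Ri. \<epsilon> (fst x * fst y) * \<phi> (snd x * snd y)) = \<phi> 1"
      using Ri1s[OF eps h] eps1 by simp
    have T2: "(\<Sum>x\<leftarrow>R. \<Sum>y\<leftarrow>Ri. \<epsilon> (fst x * fst y) * \<phi> (u * (snd x * snd y))) = \<phi> u"
      using Ri1s[OF eps lin_lm[OF h, of u]] eps1 by simp
    have S: "(\<Sum>x\<leftarrow>R. \<epsilon> (fst x * fst y) * \<phi> (snd x * snd y)) =
             (\<Sum>x\<leftarrow>R. \<epsilon> (fst x * fst y) * \<phi> (u * (snd x * snd y)))" for y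
      using step1[OF lin_rm[OF eps, of "fst y"] lin_rm[OF h, of "snd y"]] by (simp add: mult.assoc)
    have "\<phi> 1 = (\<Sum>y\<leftarrow>Ri. \<Sum>x\<leftarrow>R. \<epsilon> (fst x * fst y) * \<phi> (snd x * snd y))"
      using T1 sum_swap[where xs=R and ys=Ri and f="\<lambda>x y. \<epsilon> (fst x * fst y) * \<phi> (snd x * snd y)"]
      by simp
    also have "\<dots> = (\<Sum>y\<leftarrow>Ri. \<Sum>x\<leftarrow>R. \<epsilon> (fst x * fst y) * \<phi> (u * (snd x * snd y)))"
      by (simp only: S)
    also have "\<dots> = \<phi> u"
      using T2 sum_swap[where xs=R and ys=Ri and f="\<lambda>x y. \<epsilon> (fst x * fst y) * \<phi> (u * (snd x * snd y))"]
      by simp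
    finally have "\<phi> 1 = \<phi> u" .
    then show ?thesis using phiu[OF h] by simp
  qed
  have C8: "teq2 sH sL (\<delta> 1) [(1, 1)]"
    unfolding teq2_def
  proof (intro allI impI)
    fix \<phi> \<psi> assume h: "lin_fun sH \<phi>" "lin_fun sL \<psi>"
    have "(\<Sum>x\<leftarrow>R. \<phi> (snd x) * \<psi> (sL (\<epsilon> (fst x)) 1)) = (\<Sum>r\<leftarrow>R. \<epsilon> (fst r) * \<phi> (snd r)) * \<psi> 1"
    proof -
      have "(\<Sum>x\<leftarrow>R. \<phi> (snd x) * \<psi> (sL (\<epsilon> (fst x)) 1)) = (\<Sum>r\<leftarrow>R. \<epsilon> (fst r) * \<phi> (snd r) * \<psi> 1)"
        by (simp add: lin_fun_scale[OF h(2)] mult_ac)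
      also have "\<dots> = (\<Sum>r\<leftarrow>R. \<epsilon> (fst r) * \<phi> (snd r)) * \<psi> 1"
        by (rule sum_list_mult_const)
      finally show ?thesis .
    qed
    then show "(\<Sum>(a,b)\<leftarrow>\<delta> 1. \<phi> a * \<psi> b) = (\<Sum>(a,b)\<leftarrow>[(1, 1)]. \<phi> a * \<psi> b)"
      using U[OF h(1)] by (simp add: dl o_def split_def act_unit)
  qed
  have G3: "\<forall>x\<in>K. \<forall>l. teq2 sH sL [(c * b, n). (a,b) \<leftarrow> \<Delta> x, (c,n) \<leftarrow> \<delta> (act a l)]
                            [(a * c, act b n). (a,b) \<leftarrow> \<Delta> x, (c,n) \<leftarrow> \<delta> l]"
  proof (intro ballI allI, unfold teq2_def, intro allI impI)
    fix x l \<phi> \<psi> assume h: "lin_fun sH \<phi>" "lin_fun sL \<psi>"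
    have e: "(\<Sum>r\<leftarrow>R. \<Sum>y\<leftarrow>\<Delta> x. \<psi> (act (fst r * fst y) l) * \<phi> (snd r * snd y)) =
      (\<Sum>y\<leftarrow>\<Delta> x. \<Sum>r\<leftarrow>R. \<psi> (act (snd y * fst r) l) * \<phi> (fst y * snd r))"
      by (rule QTds[OF lin_act[OF h(2), of l] h(1)])
    show "(\<Sum>(a,b)\<leftarrow>[(c * b, n). (a,b) \<leftarrow> \<Delta> x, (c,n) \<leftarrow> \<delta> (act a l)]. \<phi> a * \<psi> b) =
          (\<Sum>(a,b)\<leftarrow>[(a * c, act b n). (a,b) \<leftarrow> \<Delta> x, (c,n) \<leftarrow> \<delta> l]. \<phi> a * \<psi> b)"
    proof -
      have e2: "(\<Sum>y\<leftarrow>\<Delta> x. \<Sum>r\<leftarrow>R. \<phi> (snd r * snd y) * \<psi> (act (fst r) (act (fst y) l))) =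
        (\<Sum>y\<leftarrow>\<Delta> x. \<Sum>r\<leftarrow>R. \<phi> (fst y * snd r) * \<psi> (act (snd y) (act (fst r) l)))"
        using e sum_swap[where xs=R and ys="\<Delta> x" and f="\<lambda>r y. \<psi> (act (fst r * fst y) l) * \<phi> (snd r * snd y)"]
        by (simp add: act_mult mult_ac)
      show ?thesis
        apply (simp add: dl o_def split_def sum_list_concat map_concat)
        using e2 by (simp add: mult_ac)
    qed
  qed
  show ?thesis
    unfolding base_algebra_def comodule_algebra_def \<delta>_def[symmetric]
    using G1 G3 G4 kL C2 C3 C4 C5 C6 C7 C8 by blast
qed

end
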